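(* Let $\phi:\mathbb{K}[x_{i|A}: i\in[n],A\subseteq[n]\setminus\{i\}]\to\mathbb{K}[y_i,\beta_j: i,j\in[n]]$, $x_{i|A}\mapsto y_i\prod_{j\in A}\beta_j$, and $I_\phi=\ker\phi=I_{\phi'}\cap\mathbb{K}[x_{i|A}:i\notin A]$. Let $T=T_1\cup T_2$ where $T_1$ consists of those elements of $G_L$ all of whose variables lie in $\mathbb{K}[x_{i|A}:i\notin A]$ (i.e. binomials $x_{i|A}x_{j|B}-x_{i|A\cap B}x_{j|A\cup B}$ in $G_L$ with $i\le j$, $i\notin A$, $j\notin A\cup B$), and $$T_2=\{x_{i|A}x_{j|B}-x_{i|(A\cap B)\cup\{j\}}\,x_{j|(A\setminus\{j\})\cup B}:\ i<j,\ i\notin A,\ j\notin B,\ j\in A,\ x_{i|A},x_{j|B}\text{ incomparable in }L\}.$$ Then $T$ generates $I_\phi$.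
   Context: $\phi'$ is the extension of $\phi$ to $\mathbb{K}[x_{i|A}: i\in[n],A\subseteq[n]]$ by the same formula, and $I_{\phi'}=\ker\phi'$. $L$ is the lattice on the variables $x_{i|A}$ with $x_{i|A}\le x_{j|B}$ iff $i\le j$ and $A\subseteq B$. $G_L=\{x_{i|A}x_{j|B}-x_{\min(i,j)|A\cap B}\,x_{\max(i,j)|A\cup B}: x_{i|A},x_{j|B}\text{ incomparable in }L\}$. *)

theory Defs
  imports Main "HOL-Library.Poly_Mapping"
begin

type_synonym ('v, 'k) mpoly = "('v \<Rightarrow>\<^sub>0 nat) \<Rightarrow>\<^sub>0 'k"

definition mvar :: "'v \<Rightarrow> ('v, 'k::comm_ring_1) mpoly" where
  "mvar v = Poly_Mapping.single (Poly_Mapping.single v 1) 1"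

definition mconst :: "'k \<Rightarrow> ('v, 'k::comm_ring_1) mpoly" where
  "mconst c = Poly_Mapping.single 0 c"

definition poly_ring :: "'v set \<Rightarrow> ('v, 'k::comm_ring_1) mpoly set" where
  "poly_ring V = {p. \<forall>m\<in>Poly_Mapping.keys p. Poly_Mapping.keys m \<subseteq> V}"

definition subst_hom :: "('v \<Rightarrow> ('w, 'k::comm_ring_1) mpoly) \<Rightarrow> ('v, 'k) mpoly \<Rightarrow> ('w, 'k) mpoly" where
  "subst_hom s p = (\<Sum>m\<in>Poly_Mapping.keys p. mconst (Poly_Mapping.lookup p m) * (\<Prod>v\<in>Poly_Mapping.keys m. s v ^ Poly_Mapping.lookup m v))"

definition ideal_gen_in :: "'a::comm_ring_1 set \<Rightarrow> 'a set \<Rightarrow> 'a set" where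
  "ideal_gen_in R T = {\<Sum>t\<in>F. c t * t | F c. finite F \<and> F \<subseteq> T \<and> (\<forall>t\<in>F. c t \<in> R)}"

text \<open>Variables x_{i|A} are pairs (i, A). Target variables: Inl i = y_i, Inr j = beta_j.\<close>

definition xvar :: "nat \<Rightarrow> nat set \<Rightarrow> (nat \<times> nat set, 'k::comm_ring_1) mpoly" where
  "xvar i A = mvar (i, A)"

definition phi_vars :: "nat \<Rightarrow> (nat \<times> nat set) set" where
  "phi_vars n = {(i, A). i \<in> {1..n} \<and> A \<subseteq> {1..n} - {i}}"

definition phi :: "(nat \<times> nat set, 'k::comm_ring_1) mpoly \<Rightarrow> (nat + nat, 'k) mpoly" where
  "phi = subst_hom (\<lambda>(i, A). mvar (Inl i) * (\<Prod>j\<in>A. mvar (Inr j)))"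

definition I_phi :: "nat \<Rightarrow> (nat \<times> nat set, 'k::comm_ring_1) mpoly set" where
  "I_phi n = {p \<in> poly_ring (phi_vars n). phi p = 0}"

definition L_le :: "nat \<times> nat set \<Rightarrow> nat \<times> nat set \<Rightarrow> bool" where
  "L_le a b \<longleftrightarrow> fst a \<le> fst b \<and> snd a \<subseteq> snd b"

definition L_incomp :: "nat \<times> nat set \<Rightarrow> nat \<times> nat set \<Rightarrow> bool" where
  "L_incomp a b \<longleftrightarrow> \<not> L_le a b \<and> \<not> L_le b a"

definition L_vars :: "nat \<Rightarrow> (nat \<times> nat set) set" where
  "L_vars n = {(i, A). i \<in> {1..n} \<and> A \<subseteq> {1..n}}"

definition G_L_binom :: "nat \<Rightarrow> nat set \<Rightarrow> nat \<Rightarrow> nat set \<Rightarrow> (nat \<times> nat set, 'k::comm_ring_1) mpoly" where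
  "G_L_binom i A j B = xvar i A * xvar j B - xvar (min i j) (A \<inter> B) * xvar (max i j) (A \<union> B)"

definition G_L :: "nat \<Rightarrow> (nat \<times> nat set, 'k::comm_ring_1) mpoly set" where
  "G_L n = {G_L_binom i A j B | i A j B. (i, A) \<in> L_vars n \<and> (j, B) \<in> L_vars n
              \<and> L_incomp (i, A) (j, B)}"

definition T1 :: "nat \<Rightarrow> (nat \<times> nat set, 'k::comm_ring_1) mpoly set" where
  "T1 n = {G_L_binom i A j B | i A j B. (i, A) \<in> L_vars n \<and> (j, B) \<in> L_vars n
              \<and> L_incomp (i, A) (j, B)
              \<and> i \<notin> A \<and> j \<notin> B \<and> min i j \<notin> A \<inter> B \<and> max i j \<notin> A \<union> B}"

definition T2 :: "nat \<Rightarrow> (nat \<times> nat set, 'k::comm_ring_1) mpoly set" where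
  "T2 n = {xvar i A * xvar j B - xvar i ((A \<inter> B) \<union> {j}) * xvar j ((A - {j}) \<union> B) | i A j B.
              (i, A) \<in> L_vars n \<and> (j, B) \<in> L_vars n
              \<and> i < j \<and> i \<notin> A \<and> j \<notin> B \<and> j \<in> A \<and> L_incomp (i, A) (j, B)}"

end

theory Submission
  imports Defs
begin


abbreviation MM :: "('v \<Rightarrow> ('w, 'k::comm_ring_1) mpoly) \<Rightarrow> ('v \<Rightarrow>\<^sub>0 nat) \<Rightarrow> ('w, 'k) mpoly" where
  "MM s m \<equiv> (\<Prod>v\<in>Poly_Mapping.keys m. s v ^ Poly_Mapping.lookup m v)"

lemma poly_expand: "p = (\<Sum>m\<in>Poly_Mapping.keys p. Poly_Mapping.single m (Poly_Mapping.lookup p m))"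
  by (rule poly_mapping_eqI) (simp add: lookup_sum lookup_single when_def sum.delta in_keys_iff)

lemma mconst_0[simp]: "mconst 0 = 0" by (simp add: mconst_def)

lemma mconst_add: "mconst (a + b) = mconst a + mconst b" by (simp add: mconst_def single_add)

lemma mconst_mult: "mconst (a * b) = mconst a * mconst b" by (simp add: mconst_def mult_single)

lemma subst_hom_superset:
  assumes "finite S" "Poly_Mapping.keys p \<subseteq> S"
  shows "subst_hom s p = (\<Sum>m\<in>S. mconst (Poly_Mapping.lookup p m) * MM s m)"
  unfolding subst_hom_def
proof (rule sum.mono_neutral_left[OF assms])
  show "\<forall>i\<in>S - Poly_Mapping.keys p. mconst (Poly_Mapping.lookup p i) * MM s i = 0"
  proof
    fix i assume "i \<in> S - Poly_Mapping.keys p"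
    then have "Poly_Mapping.lookup p i = 0" by (metis DiffD2 not_in_keys_iff_lookup_eq_zero)
    then show "mconst (Poly_Mapping.lookup p i) * MM s i = 0" by simp
  qed
qed

lemma subst_hom_add: "subst_hom s (p + q) = subst_hom s p + subst_hom s q"
proof -
  let ?S = "Poly_Mapping.keys p \<union> Poly_Mapping.keys q"
  have f: "finite ?S" by simp
  have "subst_hom s (p + q) = (\<Sum>m\<in>?S. mconst (Poly_Mapping.lookup (p+q) m) * MM s m)"
    by (rule subst_hom_superset[OF f keys_add])
  also have "\<dots> = (\<Sum>m\<in>?S. mconst (Poly_Mapping.lookup p m) * MM s m) + (\<Sum>m\<in>?S. mconst (Poly_Mapping.lookup q m) * MM s m)"
    by (simp add: lookup_add mconst_add distrib_right sum.distrib)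
  also have "\<dots> = subst_hom s p + subst_hom s q"
    using subst_hom_superset[OF f, of p s] subst_hom_superset[OF f, of q s] by simp
  finally show ?thesis .
qed

lemma subst_hom_0[simp]: "subst_hom s 0 = 0" by (simp add: subst_hom_def)

lemma subst_hom_minus: "subst_hom s (p - q) = subst_hom s p - subst_hom s q"
  using subst_hom_add[of s "p - q" q] by (simp add: eq_diff_eq)

lemma subst_hom_single: "subst_hom s (Poly_Mapping.single m c) = mconst c * MM s m"
  by (subst subst_hom_superset[of "{m}"]) auto

lemma subst_hom_sum: "subst_hom s (sum f A) = (\<Sum>a\<in>A. subst_hom s (f a))"
  by (induction A rule: infinite_finite_induct) (auto simp: subst_hom_add)

lemma MM_add: "MM s (a + b) = MM s a * MM s b"
proof -
  let ?S = "Poly_Mapping.keys a \<union> Poly_Mapping.keys b"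
  have eq: "MM s x = (\<Prod>v\<in>?S. s v ^ Poly_Mapping.lookup x v)" if "Poly_Mapping.keys x \<subseteq> ?S" for x
    by (rule prod.mono_neutral_left) (use that in \<open>auto simp: in_keys_iff\<close>)
  have "MM s (a + b) = (\<Prod>v\<in>?S. s v ^ Poly_Mapping.lookup (a+b) v)"
    by (rule eq[OF keys_add])
  also have "\<dots> = (\<Prod>v\<in>?S. s v ^ Poly_Mapping.lookup a v) * (\<Prod>v\<in>?S. s v ^ Poly_Mapping.lookup b v)"
    by (simp add: lookup_add power_add prod.distrib)
  also have "\<dots> = MM s a * MM s b" using eq[of a] eq[of b] by simp
  finally show ?thesis .
qed

lemma subst_hom_mult: "subst_hom s (p * q) = subst_hom s p * subst_hom s q"
proof -
  have "p * q = (\<Sum>a\<in>Poly_Mapping.keys p. \<Sum>b\<in>Poly_Mapping.keys q.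
           Poly_Mapping.single (a + b) (Poly_Mapping.lookup p a * Poly_Mapping.lookup q b))"
    by (subst (1 2) poly_expand) (simp add: sum_product mult_single)
  then have "subst_hom s (p * q) = (\<Sum>a\<in>Poly_Mapping.keys p. \<Sum>b\<in>Poly_Mapping.keys q.
           (mconst (Poly_Mapping.lookup p a) * MM s a) * (mconst (Poly_Mapping.lookup q b) * MM s b))"
    by (simp add: subst_hom_sum subst_hom_single MM_add mconst_mult mult_ac)
  also have "\<dots> = subst_hom s p * subst_hom s q"
    by (simp add: subst_hom_def sum_product)
  finally show ?thesis .
qed



abbreviation lk where "lk \<equiv> Poly_Mapping.lookup"
abbreviation ks where "ks \<equiv> Poly_Mapping.keys"

lemma keys_uminus': "ks (- p) = ks (p::'a \<Rightarrow>\<^sub>0 'b::ab_group_add)"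
  by (auto simp: in_keys_iff)

lemma poly_ring_add: "p \<in> poly_ring V \<Longrightarrow> q \<in> poly_ring V \<Longrightarrow> p + q \<in> poly_ring V"
  unfolding poly_ring_def
proof (intro CollectI ballI)
  fix m assume pq: "p \<in> {p. \<forall>m\<in>ks p. ks m \<subseteq> V}" "q \<in> {p. \<forall>m\<in>ks p. ks m \<subseteq> V}" and m: "m \<in> ks (p + q)"
  have "m \<in> ks p \<union> ks q" using keys_add[of p q] m by (rule subsetD)
  then show "ks m \<subseteq> V" using pq by auto
qed

lemma poly_ring_uminus: "p \<in> poly_ring V \<Longrightarrow> - p \<in> poly_ring V"
  unfolding poly_ring_def by (simp add: keys_uminus')

lemma poly_ring_diff: "p \<in> poly_ring V \<Longrightarrow> q \<in> poly_ring V \<Longrightarrow> p - q \<in> poly_ring V"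
  using poly_ring_add[OF _ poly_ring_uminus] by (metis diff_conv_add_uminus)

lemma poly_ring_mult: "p \<in> poly_ring V \<Longrightarrow> q \<in> poly_ring V \<Longrightarrow> p * q \<in> poly_ring V"
  unfolding poly_ring_def
proof safe
  fix m x assume p: "\<forall>m\<in>ks p. ks m \<subseteq> V" and q: "\<forall>m\<in>ks q. ks m \<subseteq> V"
    and m: "m \<in> ks (p * q)" and x: "x \<in> ks m"
  from m keys_mult obtain a b where "m = a + b" "a \<in> ks p" "b \<in> ks q" by blast
  with x keys_add[of a b] p q show "x \<in> V" by (meson Un_iff subsetD)
qed

lemma poly_ring_0[simp]: "0 \<in> poly_ring V" by (simp add: poly_ring_def)

lemma poly_ring_single: "ks m \<subseteq> V \<Longrightarrow> Poly_Mapping.single m c \<in> poly_ring V"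
  by (simp add: poly_ring_def)

lemma poly_ring_mconst: "mconst c \<in> poly_ring V"
  by (simp add: mconst_def poly_ring_single)

lemma poly_ring_1: "1 \<in> poly_ring V"
  using poly_ring_mconst[of 1 V] by (simp add: mconst_def)

lemma poly_ring_sum: "(\<And>a. a \<in> A \<Longrightarrow> f a \<in> poly_ring V) \<Longrightarrow> sum f A \<in> poly_ring V"
  by (induction A rule: infinite_finite_induct) (auto intro: poly_ring_add)

lemma ideal_0: "0 \<in> ideal_gen_in R T"
  unfolding ideal_gen_in_def by (rule CollectI, rule exI[of _ "{}"]) auto

lemma ideal_gen: "t \<in> T \<Longrightarrow> 1 \<in> R \<Longrightarrow> t \<in> ideal_gen_in R T"
  unfolding ideal_gen_in_def by (rule CollectI, rule exI[of _ "{t}"], rule exI[of _ "\<lambda>_. 1"]) auto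

lemma ideal_add:
  assumes R0: "0 \<in> R" and Radd: "\<And>a b. a \<in> R \<Longrightarrow> b \<in> R \<Longrightarrow> a + b \<in> R"
    and x: "x \<in> ideal_gen_in R T" and y: "y \<in> ideal_gen_in R T"
  shows "x + y \<in> ideal_gen_in R T"
proof -
  from x obtain F1 c1 where F1: "x = (\<Sum>t\<in>F1. c1 t * t)" "finite F1" "F1 \<subseteq> T" "\<forall>t\<in>F1. c1 t \<in> R"
    unfolding ideal_gen_in_def by blast
  from y obtain F2 c2 where F2: "y = (\<Sum>t\<in>F2. c2 t * t)" "finite F2" "F2 \<subseteq> T" "\<forall>t\<in>F2. c2 t \<in> R"
    unfolding ideal_gen_in_def by blast
  define c where "c t = (if t \<in> F1 then c1 t else 0) + (if t \<in> F2 then c2 t else 0)" for t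
  have "(\<Sum>t\<in>F1 \<union> F2. c t * t) = (\<Sum>t\<in>F1 \<union> F2. (if t \<in> F1 then c1 t * t else 0)) + (\<Sum>t\<in>F1 \<union> F2. (if t \<in> F2 then c2 t * t else 0))"
    unfolding sum.distrib[symmetric] by (rule sum.cong) (auto simp: c_def distrib_right)
  also have "\<dots> = x + y"
    using F1(2) F2(2) by (simp add: sum.If_cases F1(1) F2(1) Int_absorb1)
  finally have eq: "x + y = (\<Sum>t\<in>F1 \<union> F2. c t * t)" by simp
  have "\<forall>t\<in>F1 \<union> F2. c t \<in> R" using F1(4) F2(4) R0 Radd unfolding c_def by auto
  with eq F1 F2 show ?thesis unfolding ideal_gen_in_def by blast
qed

lemma ideal_mult:
  assumes Rmult: "\<And>a b. a \<in> R \<Longrightarrow> b \<in> R \<Longrightarrow> a * b \<in> R"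
    and r: "r \<in> R" and x: "x \<in> ideal_gen_in R T"
  shows "r * x \<in> ideal_gen_in R T"
proof -
  from x obtain F c where F: "x = (\<Sum>t\<in>F. c t * t)" "finite F" "F \<subseteq> T" "\<forall>t\<in>F. c t \<in> R"
    unfolding ideal_gen_in_def by blast
  have 1: "r * x = (\<Sum>t\<in>F. (r * c t) * t)" by (simp add: F(1) sum_distrib_left mult.assoc)
  have 2: "\<forall>t\<in>F. r * c t \<in> R" using F(4) r Rmult by auto
  show ?thesis unfolding ideal_gen_in_def
    by (rule CollectI, rule exI[of _ F], rule exI[of _ "\<lambda>t. r * c t"]) (use 1 2 F(2,3) in auto)
qed

lemma ideal_elem_in_R:
  assumes "x \<in> ideal_gen_in (poly_ring V) T" "T \<subseteq> poly_ring V"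
  shows "x \<in> poly_ring V"
  using assms unfolding ideal_gen_in_def
  by (auto intro!: poly_ring_sum poly_ring_mult)



definition e1 :: "nat \<times> nat set \<Rightarrow> (nat + nat) \<Rightarrow>\<^sub>0 nat" where
  "e1 v = Poly_Mapping.single (Inl (fst v)) 1 + (\<Sum>j\<in>snd v. Poly_Mapping.single (Inr j) 1)"

definition EXP :: "((nat \<times> nat set) \<Rightarrow>\<^sub>0 nat) \<Rightarrow> (nat + nat) \<Rightarrow>\<^sub>0 nat" where
  "EXP m = (\<Sum>v\<in>ks m. \<Sum>x<lk m v. e1 v)"

definition deg :: "('v \<Rightarrow>\<^sub>0 nat) \<Rightarrow> nat" where
  "deg m = (\<Sum>v\<in>ks m. lk m v)"

lemma prod_single1: "(\<Prod>x\<in>A. Poly_Mapping.single (g x) (1::'k::comm_ring_1)) = Poly_Mapping.single (\<Sum>x\<in>A. g x) 1"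
  by (induction A rule: infinite_finite_induct) (auto simp: mult_single)

lemma s_eq: "(\<lambda>(i, A). mvar (Inl i) * (\<Prod>j\<in>A. mvar (Inr j))) v = (Poly_Mapping.single (e1 v) 1 :: (nat + nat, 'k::comm_ring_1) mpoly)"
  by (cases v) (simp add: mvar_def prod_single1 mult_single e1_def)

lemma pow_single1: "Poly_Mapping.single e (1::'k::comm_ring_1) ^ k = Poly_Mapping.single (\<Sum>x<k. e) 1"
proof -
  have "Poly_Mapping.single e (1::'k) ^ k = (\<Prod>x<k. Poly_Mapping.single e 1)" by simp
  also have "\<dots> = Poly_Mapping.single (\<Sum>x<k. e) 1" by (rule prod_single1)
  finally show ?thesis .
qed

lemma MM_phi: "MM (\<lambda>(i, A). mvar (Inl i) * (\<Prod>j\<in>A. mvar (Inr j))) m = (Poly_Mapping.single (EXP m) 1 :: (nat + nat, 'k::comm_ring_1) mpoly)"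
proof -
  have "MM (\<lambda>(i, A). mvar (Inl i) * (\<Prod>j\<in>A. mvar (Inr j))) m = (\<Prod>v\<in>ks m. (Poly_Mapping.single (e1 v) (1::'k)) ^ lk m v)"
    by (simp only: s_eq)
  also have "\<dots> = (\<Prod>v\<in>ks m. Poly_Mapping.single (\<Sum>x<lk m v. e1 v) (1::'k))"
    by (simp only: pow_single1)
  also have "\<dots> = Poly_Mapping.single (EXP m) 1" by (simp only: prod_single1 EXP_def)
  finally show ?thesis .
qed

lemma phi_single: "phi (Poly_Mapping.single m c) = (Poly_Mapping.single (EXP m) c :: (nat + nat, 'k::comm_ring_1) mpoly)"
  by (simp add: phi_def subst_hom_single MM_phi mconst_def mult_single)

lemma phi_expand: "phi (p :: (nat \<times> nat set, 'k::comm_ring_1) mpoly) = (\<Sum>m\<in>ks p. Poly_Mapping.single (EXP m) (lk p m))"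
  unfolding phi_def subst_hom_def by (simp add: MM_phi mconst_def mult_single)

lemma phi_mult: "phi (p * q) = phi p * phi q"
  unfolding phi_def by (rule subst_hom_mult)

lemma phi_minus: "phi (p - q) = phi p - phi q"
  unfolding phi_def by (rule subst_hom_minus)

lemma lookup_e1_Inl: "lk (e1 v) (Inl i) = (if fst v = i then 1 else 0)"
  by (simp add: e1_def lookup_add lookup_sum lookup_single)

lemma lookup_e1_Inr: "finite (snd v) \<Longrightarrow> lk (e1 v) (Inr k) = (if k \<in> snd v then 1 else 0)"
  by (simp add: e1_def lookup_add lookup_sum lookup_single when_def)

lemma lookup_EXP: "lk (EXP m) z = (\<Sum>v\<in>ks m. lk m v * lk (e1 v) z)"
  by (simp add: EXP_def lookup_sum)

lemma EXP_superset: "finite S \<Longrightarrow> ks m \<subseteq> S \<Longrightarrow> lk (EXP m) z = (\<Sum>v\<in>S. lk m v * lk (e1 v) z)"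
  unfolding lookup_EXP
  by (rule sum.mono_neutral_left) (auto simp: not_in_keys_iff_lookup_eq_zero)

lemma EXP_add: "EXP (a + b) = EXP a + EXP b"
proof (rule poly_mapping_eqI)
  fix z
  let ?S = "ks a \<union> ks b"
  have f: "finite ?S" by simp
  have "lk (EXP (a + b)) z = (\<Sum>v\<in>?S. lk (a + b) v * lk (e1 v) z)"
    by (rule EXP_superset[OF f keys_add])
  also have "\<dots> = (\<Sum>v\<in>?S. lk a v * lk (e1 v) z) + (\<Sum>v\<in>?S. lk b v * lk (e1 v) z)"
    by (simp add: lookup_add distrib_right sum.distrib)
  also have "\<dots> = lk (EXP a) z + lk (EXP b) z"
    using EXP_superset[OF f, of a z] EXP_superset[OF f, of b z] by simp
  finally show "lk (EXP (a + b)) z = lk (EXP a + EXP b) z" by (simp add: lookup_add)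
qed

lemma EXP_single: "EXP (Poly_Mapping.single v 1) = e1 v"
  by (simp add: EXP_def)

lemma EXP_0[simp]: "EXP 0 = 0"
  by (simp add: EXP_def)

lemma deg_superset: "finite S \<Longrightarrow> ks m \<subseteq> S \<Longrightarrow> deg m = (\<Sum>v\<in>S. lk m v)"
  unfolding deg_def
  by (rule sum.mono_neutral_left) (auto simp: not_in_keys_iff_lookup_eq_zero)

lemma deg_add: "deg (a + b) = deg a + deg b"
proof -
  let ?S = "ks a \<union> ks b"
  have f: "finite ?S" by simp
  have "deg (a + b) = (\<Sum>v\<in>?S. lk (a + b) v)"
    by (rule deg_superset[OF f keys_add])
  also have "\<dots> = (\<Sum>v\<in>?S. lk a v) + (\<Sum>v\<in>?S. lk b v)"
    by (simp add: lookup_add sum.distrib)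
  also have "\<dots> = deg a + deg b"
    using deg_superset[OF f, of a] deg_superset[OF f, of b] by simp
  finally show ?thesis .
qed

lemma deg_single: "deg (Poly_Mapping.single v 1) = 1"
  by (simp add: deg_def)

lemma deg_0_iff: "deg m = 0 \<longleftrightarrow> m = 0"
proof
  assume "deg m = 0"
  then have "\<forall>v\<in>ks m. lk m v = 0" unfolding deg_def by simp
  then show "m = 0" by (metis lookup_not_eq_zero_eq_in_keys lookup_zero poly_mapping_eqI)
qed (simp add: deg_def)



lemma sum_pos_nat: "finite A \<Longrightarrow> (0 < sum f A) = (\<exists>a\<in>A. 0 < (f a::nat))"
proof -
  assume "finite A"
  then have "(sum f A = 0) = (\<forall>a\<in>A. f a = 0)" by (rule sum_eq_0_iff)
  then show ?thesis by (metis gr0I not_gr0)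
qed

lemma EXP_Inl_pos: "lk (EXP m) (Inl i) > 0 \<longleftrightarrow> (\<exists>v\<in>ks m. fst v = i)"
proof -
  have "lk (EXP m) (Inl i) = (\<Sum>v\<in>ks m. lk m v * (if fst v = i then 1 else 0))"
    by (simp add: lookup_EXP lookup_e1_Inl)
  then show ?thesis
    by (auto simp: sum_pos_nat in_keys_iff)
qed

lemma EXP_Inr_pos: "\<forall>v\<in>ks m. finite (snd v) \<Longrightarrow> lk (EXP m) (Inr k) > 0 \<longleftrightarrow> (\<exists>v\<in>ks m. k \<in> snd v)"
proof -
  assume f: "\<forall>v\<in>ks m. finite (snd v)"
  have "lk (EXP m) (Inr k) = (\<Sum>v\<in>ks m. lk m v * (if k \<in> snd v then 1 else 0))"
    unfolding lookup_EXP by (rule sum.cong) (use f in \<open>auto simp: lookup_e1_Inr\<close>)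
  then show ?thesis
    by (auto simp: sum_pos_nat in_keys_iff)
qed

lemma phi_vars_finite: "v \<in> phi_vars n \<Longrightarrow> finite (snd v)"
  unfolding phi_vars_def by (auto elim: finite_subset[OF _ finite_subset[OF Diff_subset]])

definition conn :: "'k::field itself \<Rightarrow> nat \<Rightarrow> ((nat \<times> nat set) \<Rightarrow>\<^sub>0 nat) \<Rightarrow> ((nat \<times> nat set) \<Rightarrow>\<^sub>0 nat) \<Rightarrow> bool" where
  "conn K n m m' \<longleftrightarrow> (Poly_Mapping.single m 1 - Poly_Mapping.single m' 1 :: (nat \<times> nat set, 'k) mpoly)
      \<in> ideal_gen_in (poly_ring (phi_vars n)) (T1 n \<union> T2 n)"

lemma conn_refl: "conn K n m m"
  by (simp add: conn_def ideal_0)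

lemma J_add: "x \<in> ideal_gen_in (poly_ring V) T \<Longrightarrow> y \<in> ideal_gen_in (poly_ring V) T \<Longrightarrow> x + y \<in> ideal_gen_in (poly_ring V) T"
  by (rule ideal_add[OF poly_ring_0 poly_ring_add])

lemma J_mult: "r \<in> poly_ring V \<Longrightarrow> x \<in> ideal_gen_in (poly_ring V) T \<Longrightarrow> r * x \<in> ideal_gen_in (poly_ring V) T"
  by (rule ideal_mult[OF poly_ring_mult])

lemma conn_sym: "conn (TYPE('k::field)) n m m' \<Longrightarrow> conn (TYPE('k)) n m' m"
  unfolding conn_def
proof -
  assume a: "(Poly_Mapping.single m 1 - Poly_Mapping.single m' 1 :: (nat \<times> nat set, 'k) mpoly) \<in> ideal_gen_in (poly_ring (phi_vars n)) (T1 n \<union> T2 n)"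
  have "(-1) * (Poly_Mapping.single m 1 - Poly_Mapping.single m' 1 :: (nat \<times> nat set, 'k) mpoly) \<in> ideal_gen_in (poly_ring (phi_vars n)) (T1 n \<union> T2 n)"
    by (rule J_mult[OF poly_ring_uminus[OF poly_ring_1] a])
  then show "(Poly_Mapping.single m' 1 - Poly_Mapping.single m 1 :: (nat \<times> nat set, 'k) mpoly) \<in> ideal_gen_in (poly_ring (phi_vars n)) (T1 n \<union> T2 n)"
    by simp
qed

lemma conn_trans: "conn K n m1 m2 \<Longrightarrow> conn K n m2 m3 \<Longrightarrow> conn K n m1 m3"
  unfolding conn_def by (drule (1) J_add) simp

lemma xvar_mult: "(xvar i A * xvar j B :: (nat \<times> nat set, 'k::comm_ring_1) mpoly) = Poly_Mapping.single (Poly_Mapping.single (i, A) 1 + Poly_Mapping.single (j, B) 1) 1"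
  by (simp add: xvar_def mvar_def mult_single)

lemma conn_move:
  assumes t: "(xvar (fst v) (snd v) * xvar (fst w) (snd w) - xvar (fst v') (snd v') * xvar (fst w') (snd w') :: (nat \<times> nat set, 'k::field) mpoly) \<in> T1 n \<union> T2 n"
    and u: "ks u \<subseteq> phi_vars n"
  shows "conn (TYPE('k)) n (u + Poly_Mapping.single v 1 + Poly_Mapping.single w 1) (u + Poly_Mapping.single v' 1 + Poly_Mapping.single w' 1)"
proof -
  let ?X = "\<lambda>m. Poly_Mapping.single m (1::'k)"
  have "?X (u + Poly_Mapping.single v 1 + Poly_Mapping.single w 1) - ?X (u + Poly_Mapping.single v' 1 + Poly_Mapping.single w' 1)
     = ?X u * (xvar (fst v) (snd v) * xvar (fst w) (snd w) - xvar (fst v') (snd v') * xvar (fst w') (snd w'))"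
    by (simp add: xvar_mult mult_single right_diff_distrib add.assoc)
  moreover have "?X u * (xvar (fst v) (snd v) * xvar (fst w) (snd w) - xvar (fst v') (snd v') * xvar (fst w') (snd w')) \<in> ideal_gen_in (poly_ring (phi_vars n)) (T1 n \<union> T2 n)"
    by (rule J_mult[OF poly_ring_single[OF u] ideal_gen[OF t poly_ring_1]])
  ultimately show ?thesis unfolding conn_def by simp
qed

lemma decomp1: "v \<in> ks (m::_ \<Rightarrow>\<^sub>0 nat) \<Longrightarrow> m = Poly_Mapping.single v 1 + (m - Poly_Mapping.single v 1)"
  by (rule poly_mapping_eqI) (auto simp: lookup_add lookup_minus lookup_single when_def in_keys_iff Suc_le_eq)

lemma keys_minus_sub: "ks (m - (x :: _ \<Rightarrow>\<^sub>0 nat)) \<subseteq> ks m"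
  by (auto simp: in_keys_iff lookup_minus)

lemma decomp2:
  assumes "v \<in> ks (m::_ \<Rightarrow>\<^sub>0 nat)" "w \<in> ks m" "v \<noteq> w"
  shows "\<exists>u. m = u + Poly_Mapping.single v 1 + Poly_Mapping.single w 1 \<and> ks u \<subseteq> ks m"
proof -
  define m1 where "m1 = m - Poly_Mapping.single v 1"
  have 1: "m = Poly_Mapping.single v 1 + m1" unfolding m1_def by (rule decomp1[OF assms(1)])
  have "lk m1 w = lk m w" unfolding m1_def using assms(3) by (simp add: lookup_minus lookup_single)
  then have w1: "w \<in> ks m1" using assms(2) by (simp add: in_keys_iff)
  define u where "u = m1 - Poly_Mapping.single w 1"
  have 2: "m1 = Poly_Mapping.single w 1 + u" unfolding u_def by (rule decomp1[OF w1])
  have "m = u + Poly_Mapping.single v 1 + Poly_Mapping.single w 1" using 1 2 by (simp add: ac_simps)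
  moreover have "ks u \<subseteq> ks m" unfolding u_def m1_def using keys_minus_sub by (metis subset_trans)
  ultimately show ?thesis by blast
qed

lemma keys_add_single: "ks (u + Poly_Mapping.single v (1::nat)) = insert v (ks u)"
  by (auto simp: in_keys_iff lookup_add lookup_single when_def split: if_splits)

lemma do_move:
  assumes m: "ks m \<subseteq> phi_vars n" and vw: "v \<in> ks m" "w \<in> ks m" "v \<noteq> w"
    and t: "(xvar (fst v) (snd v) * xvar (fst w) (snd w) - xvar (fst v') (snd v') * xvar (fst w') (snd w') :: (nat \<times> nat set, 'k::field) mpoly) \<in> T1 n \<union> T2 n"
    and v': "v' \<in> phi_vars n" and w': "w' \<in> phi_vars n"
    and e: "e1 v + e1 w = e1 v' + e1 w'"
  shows "\<exists>m'. ks m' \<subseteq> phi_vars n \<and> w' \<in> ks m' \<and> EXP m' = EXP m \<and> deg m' = deg m \<and> conn (TYPE('k)) n m m'"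
proof -
  obtain u where u: "m = u + Poly_Mapping.single v 1 + Poly_Mapping.single w 1" "ks u \<subseteq> ks m"
    using decomp2[OF vw] by blast
  define m' where "m' = u + Poly_Mapping.single v' 1 + Poly_Mapping.single w' 1"
  have uk: "ks u \<subseteq> phi_vars n" using u(2) m by blast
  have "ks m' = insert w' (insert v' (ks u))" unfolding m'_def by (simp only: keys_add_single)
  then have 1: "ks m' \<subseteq> phi_vars n" "w' \<in> ks m'" using uk v' w' by auto
  have 2: "EXP m' = EXP m" unfolding m'_def u(1) EXP_add EXP_single by (simp add: add.assoc e)
  have 3: "deg m' = deg m" unfolding m'_def u(1) deg_add deg_single by simp
  have 4: "conn (TYPE('k)) n m m'" unfolding m'_def u(1) by (rule conn_move[OF t uk])
  show ?thesis using 1 2 3 4 by blast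
qed

lemma e1_eq:
  assumes "finite A" "finite B" "finite A'" "finite B'"
    and "\<And>x. (if i = x then 1 else 0) + (if j = x then 1 else 0) = (if i' = x then 1 else (0::nat)) + (if j' = x then 1 else 0)"
    and "\<And>k. (if k \<in> A then 1 else 0) + (if k \<in> B then 1 else 0) = (if k \<in> A' then 1 else (0::nat)) + (if k \<in> B' then 1 else 0)"
  shows "e1 (i, A) + e1 (j, B) = e1 (i', A') + e1 (j', B')"
proof (rule poly_mapping_eqI)
  fix z show "lk (e1 (i, A) + e1 (j, B)) z = lk (e1 (i', A') + e1 (j', B')) z"
  proof (cases z)
    case (Inl x) then show ?thesis using assms(5)[of x] by (simp add: lookup_add lookup_e1_Inl)
  next
    case (Inr k) then show ?thesis using assms(1-4) assms(6)[of k] by (simp add: lookup_add lookup_e1_Inr)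
  qed
qed



definition Uf :: "((nat + nat) \<Rightarrow>\<^sub>0 nat) \<Rightarrow> nat \<Rightarrow> nat set" where
  "Uf e j = {k. k \<noteq> j \<and> 0 < lk e (Inr k)}"

lemma pv_iff: "(i, A) \<in> phi_vars n \<longleftrightarrow> i \<in> {1..n} \<and> A \<subseteq> {1..n} - {i}"
  by (simp add: phi_vars_def)

lemma pv_fin: "ks m \<subseteq> phi_vars n \<Longrightarrow> \<forall>v\<in>ks m. finite (snd v)"
  using phi_vars_finite by blast

lemma U_sub: "ks m \<subseteq> phi_vars n \<Longrightarrow> Uf (EXP m) j \<subseteq> {1..n} - {j}"
proof
  fix k assume m: "ks m \<subseteq> phi_vars n" and k: "k \<in> Uf (EXP m) j"
  then have "k \<noteq> j" "0 < lk (EXP m) (Inr k)" by (auto simp: Uf_def)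
  then obtain v where v: "v \<in> ks m" "k \<in> snd v" using EXP_Inr_pos[OF pv_fin[OF m]] by blast
  obtain i B where "v = (i, B)" by fastforce
  with v m have "(i, B) \<in> phi_vars n" "k \<in> B" by auto
  then have "k \<in> {1..n}" unfolding pv_iff by blast
  with \<open>k \<noteq> j\<close> show "k \<in> {1..n} - {j}" by simp
qed

lemma A_sub_U: "ks m \<subseteq> phi_vars n \<Longrightarrow> (j, A) \<in> ks m \<Longrightarrow> A \<subseteq> Uf (EXP m) j"
proof
  fix k assume m: "ks m \<subseteq> phi_vars n" and jA: "(j, A) \<in> ks m" and k: "k \<in> A"
  have "(j, A) \<in> phi_vars n" using jA m by blast
  then have "k \<noteq> j" using k unfolding pv_iff by blast
  moreover have "0 < lk (EXP m) (Inr k)" using EXP_Inr_pos[OF pv_fin[OF m]] jA k by fastforce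
  ultimately show "k \<in> Uf (EXP m) j" by (simp add: Uf_def)
qed

lemma pv_L: "(i, A) \<in> phi_vars n \<Longrightarrow> (i, A) \<in> L_vars n"
  by (auto simp: pv_iff L_vars_def)

lemma T1I: "(i, A) \<in> L_vars n \<Longrightarrow> (j, B) \<in> L_vars n \<Longrightarrow> L_incomp (i, A) (j, B) \<Longrightarrow> i \<notin> A \<Longrightarrow> j \<notin> B
   \<Longrightarrow> min i j \<notin> A \<inter> B \<Longrightarrow> max i j \<notin> A \<union> B \<Longrightarrow> G_L_binom i A j B \<in> T1 n"
  unfolding T1_def by blast

lemma T2I: "(i, A) \<in> L_vars n \<Longrightarrow> (j, B) \<in> L_vars n \<Longrightarrow> i < j \<Longrightarrow> i \<notin> A \<Longrightarrow> j \<notin> B \<Longrightarrow> j \<in> A \<Longrightarrow> L_incomp (i, A) (j, B)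
   \<Longrightarrow> xvar i A * xvar j B - xvar i ((A \<inter> B) \<union> {j}) * xvar j ((A - {j}) \<union> B) \<in> T2 n"
  unfolding T2_def by blast

lemma do_move':
  assumes m: "ks m \<subseteq> phi_vars n" and vw: "(i, A) \<in> ks m" "(j, B) \<in> ks m" "(i, A) \<noteq> (j, B)"
    and t: "(xvar i A * xvar j B - xvar i' A' * xvar j' B' :: (nat \<times> nat set, 'k::field) mpoly) \<in> T1 n \<union> T2 n"
    and v': "(i', A') \<in> phi_vars n" and w': "(j', B') \<in> phi_vars n"
    and e: "e1 (i, A) + e1 (j, B) = e1 (i', A') + e1 (j', B')"
  shows "\<exists>m'. ks m' \<subseteq> phi_vars n \<and> (j', B') \<in> ks m' \<and> EXP m' = EXP m \<and> deg m' = deg m \<and> conn (TYPE('k)) n m m'"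
  using do_move[of m n "(i, A)" "(j, B)" "(i', A')" "(j', B')"] assms by simp

lemma top:
  assumes "ks m \<subseteq> phi_vars n" "(j, A) \<in> ks m" "\<forall>i. 0 < lk (EXP m) (Inl i) \<longrightarrow> i \<le> j"
  shows "\<exists>r. ks r \<subseteq> phi_vars n \<and> deg r + 1 = deg m \<and>
           EXP (Poly_Mapping.single (j, Uf (EXP m) j) 1 + r) = EXP m \<and>
           conn (TYPE('k::field)) n m (Poly_Mapping.single (j, Uf (EXP m) j) 1 + r)"
  using assms
proof (induction "card (Uf (EXP m) j - A)" arbitrary: m A rule: less_induct)
  case less
  note m = less.prems(1) and jA = less.prems(2) and jmax = less.prems(3)
  let ?U = "Uf (EXP m) j"
  have finU: "finite ?U" using U_sub[OF m] by (rule finite_subset) simp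
  have AU: "A \<subseteq> ?U" by (rule A_sub_U[OF m jA])
  have jA_pv: "(j, A) \<in> phi_vars n" using m jA by blast
  show ?case
  proof (cases "A = ?U")
    case True
    define r where "r = m - Poly_Mapping.single (j, A) 1"
    have mr: "m = Poly_Mapping.single (j, A) 1 + r" unfolding r_def by (rule decomp1[OF jA])
    have "ks r \<subseteq> phi_vars n" unfolding r_def using keys_minus_sub m by (metis subset_trans)
    moreover have "deg r + 1 = deg m" using arg_cong[OF mr, of deg] unfolding deg_add deg_single by simp
    moreover have "EXP (Poly_Mapping.single (j, ?U) 1 + r) = EXP m" using True mr by simp
    moreover have "conn (TYPE('k)) n m (Poly_Mapping.single (j, ?U) 1 + r)" using True mr conn_refl by simp
    ultimately show ?thesis by blast
  next
    case False
    with AU obtain k where k: "k \<in> ?U" "k \<notin> A" by blast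
    then have kj: "k \<noteq> j" and kpos: "0 < lk (EXP m) (Inr k)" by (auto simp: Uf_def)
    obtain v where v: "v \<in> ks m" "k \<in> snd v" using EXP_Inr_pos[OF pv_fin[OF m]] kpos by blast
    obtain i B where iB: "v = (i, B)" by fastforce
    have iBk: "(i, B) \<in> ks m" "k \<in> B" using v iB by auto
    have "0 < lk (EXP m) (Inl i)" using EXP_Inl_pos iBk(1) by fastforce
    then have ij: "i \<le> j" using jmax by blast
    have iB_pv: "(i, B) \<in> phi_vars n" using m iBk by blast
    have iBc: "i \<in> {1..n}" "B \<subseteq> {1..n} - {i}" using iB_pv by (auto simp: pv_iff)
    have jAc: "j \<in> {1..n}" "A \<subseteq> {1..n} - {j}" using jA_pv by (auto simp: pv_iff)
    have fA: "finite A" "finite B" using iBc jAc by (auto intro: finite_subset)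
    have neq: "(i, B) \<noteq> (j, A)" "(j, A) \<noteq> (i, B)" using k iBk by auto
    have claim: "\<exists>m' A'. ks m' \<subseteq> phi_vars n \<and> (j, A') \<in> ks m' \<and> EXP m' = EXP m \<and> deg m' = deg m
                   \<and> conn (TYPE('k)) n m m' \<and> insert k A \<subseteq> A'"
    proof (cases "i = j")
      case True
      show ?thesis
      proof (cases "A \<subseteq> B")
        case True
        then have "insert k A \<subseteq> B" using iBk by blast
        moreover have "(j, B) \<in> ks m" using iBk \<open>i = j\<close> by simp
        ultimately show ?thesis using m conn_refl[of "TYPE('k)" n m] by blast
      next
        case False
        have t: "(xvar j A * xvar j B - xvar j (A \<inter> B) * xvar j (A \<union> B) :: (nat \<times> nat set, 'k) mpoly) \<in> T1 n \<union> T2 n"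
        proof -
          have "(xvar j A * xvar j B - xvar j (A \<inter> B) * xvar j (A \<union> B) :: (nat \<times> nat set, 'k) mpoly) = G_L_binom j A j B"
            by (simp add: G_L_binom_def)
          moreover have "(G_L_binom j A j B :: (nat \<times> nat set, 'k) mpoly) \<in> T1 n"
            using False iBk jAc iBc \<open>i = j\<close> pv_L[OF jA_pv] pv_L[OF iB_pv] k
            by (intro T1I) (auto simp: L_incomp_def L_le_def)
          ultimately show ?thesis by simp
        qed
        have e: "e1 (j, A) + e1 (j, B) = e1 (j, A \<inter> B) + e1 (j, A \<union> B)"
          by (rule e1_eq) (use fA in auto)
        have v': "(j, A \<inter> B) \<in> phi_vars n" "(j, A \<union> B) \<in> phi_vars n"
          using jAc iBc \<open>i = j\<close> by (auto simp: pv_iff)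
        obtain m' where "ks m' \<subseteq> phi_vars n \<and> (j, A \<union> B) \<in> ks m' \<and> EXP m' = EXP m \<and> deg m' = deg m \<and> conn (TYPE('k)) n m m'"
          using do_move'[OF m jA iBk(1)[unfolded \<open>i = j\<close>] _ t v' e] neq \<open>i = j\<close> by auto
        then show ?thesis using iBk by blast
      qed
    next
      case False
      then have ilj: "i < j" using ij by simp
      show ?thesis
      proof (cases "j \<in> B")
        case False
        have t: "(xvar i B * xvar j A - xvar i (B \<inter> A) * xvar j (B \<union> A) :: (nat \<times> nat set, 'k) mpoly) \<in> T1 n \<union> T2 n"
        proof -
          have "(xvar i B * xvar j A - xvar i (B \<inter> A) * xvar j (B \<union> A) :: (nat \<times> nat set, 'k) mpoly) = G_L_binom i B j A"
            using ilj by (simp add: G_L_binom_def)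
          moreover have "(G_L_binom i B j A :: (nat \<times> nat set, 'k) mpoly) \<in> T1 n"
            using False ilj iBk jAc iBc pv_L[OF jA_pv] pv_L[OF iB_pv] k
            by (intro T1I) (auto simp: L_incomp_def L_le_def)
          ultimately show ?thesis by simp
        qed
        have e: "e1 (i, B) + e1 (j, A) = e1 (i, B \<inter> A) + e1 (j, B \<union> A)"
          by (rule e1_eq) (use fA in auto)
        have v': "(i, B \<inter> A) \<in> phi_vars n" "(j, B \<union> A) \<in> phi_vars n"
          using jAc iBc False by (auto simp: pv_iff)
        obtain m' where "ks m' \<subseteq> phi_vars n \<and> (j, B \<union> A) \<in> ks m' \<and> EXP m' = EXP m \<and> deg m' = deg m \<and> conn (TYPE('k)) n m m'"
          using do_move'[OF m iBk(1) jA neq(1) t v' e] by auto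
        then show ?thesis using iBk by blast
      next
        case True
        have t: "(xvar i B * xvar j A - xvar i ((B \<inter> A) \<union> {j}) * xvar j ((B - {j}) \<union> A) :: (nat \<times> nat set, 'k) mpoly) \<in> T1 n \<union> T2 n"
        proof -
          have "(xvar i B * xvar j A - xvar i ((B \<inter> A) \<union> {j}) * xvar j ((B - {j}) \<union> A) :: (nat \<times> nat set, 'k) mpoly) \<in> T2 n"
            using True ilj iBk jAc iBc pv_L[OF jA_pv] pv_L[OF iB_pv] k
            by (intro T2I) (auto simp: L_incomp_def L_le_def)
          then show ?thesis by simp
        qed
        have e: "e1 (i, B) + e1 (j, A) = e1 (i, (B \<inter> A) \<union> {j}) + e1 (j, (B - {j}) \<union> A)"
          by (rule e1_eq) (use fA True jAc in auto)
        have v': "(i, (B \<inter> A) \<union> {j}) \<in> phi_vars n" "(j, (B - {j}) \<union> A) \<in> phi_vars n"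
          using jAc iBc ilj by (auto simp: pv_iff)
        obtain m' where "ks m' \<subseteq> phi_vars n \<and> (j, (B - {j}) \<union> A) \<in> ks m' \<and> EXP m' = EXP m \<and> deg m' = deg m \<and> conn (TYPE('k)) n m m'"
          using do_move'[OF m iBk(1) jA neq(1) t v' e] by auto
        then show ?thesis using iBk kj by blast
      qed
    qed
    then obtain m' A' where m': "ks m' \<subseteq> phi_vars n" "(j, A') \<in> ks m'" "EXP m' = EXP m" "deg m' = deg m"
        "conn (TYPE('k)) n m m'" "insert k A \<subseteq> A'" by blast
    have A'U: "A' \<subseteq> ?U" using A_sub_U[OF m'(1,2)] m'(3) by simp
    have "card (Uf (EXP m') j - A') < card (?U - A)"
    proof -
      have "?U - A' \<subset> ?U - A" using m'(6) k A'U by blast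
      then show ?thesis using m'(3) finU by (simp add: psubset_card_mono)
    qed
    moreover have "\<forall>i. 0 < lk (EXP m') (Inl i) \<longrightarrow> i \<le> j" using jmax m'(3) by simp
    ultimately obtain r where r: "ks r \<subseteq> phi_vars n" "deg r + 1 = deg m'"
        "EXP (Poly_Mapping.single (j, Uf (EXP m') j) 1 + r) = EXP m'"
        "conn (TYPE('k)) n m' (Poly_Mapping.single (j, Uf (EXP m') j) 1 + r)"
      using less.hyps[OF _ m'(1,2)] by blast
    show ?thesis using r m'(3,4) conn_trans[OF m'(5)] by auto
  qed
qed



lemma conn_shift:
  assumes "conn (TYPE('k::field)) n a b" "ks u \<subseteq> phi_vars n"
  shows "conn (TYPE('k)) n (u + a) (u + b)"
proof -
  have "(Poly_Mapping.single (u + a) 1 - Poly_Mapping.single (u + b) 1 :: (nat \<times> nat set, 'k) mpoly)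
      = Poly_Mapping.single u 1 * (Poly_Mapping.single a 1 - Poly_Mapping.single b 1)"
    by (simp add: mult_single right_diff_distrib)
  then show ?thesis using assms unfolding conn_def
    by (metis J_mult poly_ring_single)
qed

lemma EXP_zero_iff: "EXP m = 0 \<longleftrightarrow> m = 0"
proof
  assume e: "EXP m = 0"
  show "m = 0"
  proof (rule ccontr)
    assume "m \<noteq> 0"
    then obtain v where "v \<in> ks m" by (metis all_not_in_conv keys_eq_empty)
    then have "0 < lk (EXP m) (Inl (fst v))" using EXP_Inl_pos by blast
    with e show False by simp
  qed
qed simp

lemma main_conn:
  "\<forall>m m'. deg m = N \<longrightarrow> ks m \<subseteq> phi_vars n \<longrightarrow> ks m' \<subseteq> phi_vars n \<longrightarrow> EXP m = EXP m'
     \<longrightarrow> conn (TYPE('k::field)) n m m'"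
proof (induction N)
  case 0
  show ?case
  proof (intro allI impI)
    fix m m' :: "(nat \<times> nat set) \<Rightarrow>\<^sub>0 nat"
    assume "deg m = 0" "EXP m = EXP m'"
    then have "m = 0" using deg_0_iff by auto
    then have "EXP m' = 0" using \<open>EXP m = EXP m'\<close> by simp
    then have "m' = 0" using EXP_zero_iff by blast
    note \<open>m = 0\<close> this
    then show "conn (TYPE('k)) n m m'" by (simp add: conn_refl)
  qed
next
  case (Suc N)
  show ?case
  proof (intro allI impI)
    fix m m' :: "(nat \<times> nat set) \<Rightarrow>\<^sub>0 nat"
    assume d: "deg m = Suc N" and m: "ks m \<subseteq> phi_vars n" and m': "ks m' \<subseteq> phi_vars n" and e: "EXP m = EXP m'"
    have "m \<noteq> 0" using d deg_0_iff[of m] by auto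
    then have ne: "ks m \<noteq> {}" by simp
    define j where "j = Max (fst ` ks m)"
    have "j \<in> fst ` ks m" unfolding j_def using ne by (intro Max_in) auto
    then obtain A where jA: "(j, A) \<in> ks m" by force
    have jmax: "\<forall>i. 0 < lk (EXP m) (Inl i) \<longrightarrow> i \<le> j"
    proof (intro allI impI)
      fix i assume "0 < lk (EXP m) (Inl i)"
      then obtain v where "v \<in> ks m" "fst v = i" using EXP_Inl_pos by blast
      then show "i \<le> j" unfolding j_def by force
    qed
    have "0 < lk (EXP m') (Inl j)" using e[symmetric] EXP_Inl_pos jA by fastforce
    then obtain v where "v \<in> ks m'" "fst v = j" using EXP_Inl_pos by blast
    then obtain A' where jA': "(j, A') \<in> ks m'" by (metis prod.collapse)
    have jmax': "\<forall>i. 0 < lk (EXP m') (Inl i) \<longrightarrow> i \<le> j" using jmax e by simp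
    let ?U = "Uf (EXP m) j"
    obtain r where r: "ks r \<subseteq> phi_vars n" "deg r + 1 = deg m"
        "EXP (Poly_Mapping.single (j, ?U) 1 + r) = EXP m"
        "conn (TYPE('k)) n m (Poly_Mapping.single (j, ?U) 1 + r)"
      using top[OF m jA jmax] by blast
    obtain r' where r': "ks r' \<subseteq> phi_vars n" "deg r' + 1 = deg m'"
        "EXP (Poly_Mapping.single (j, ?U) 1 + r') = EXP m'"
        "conn (TYPE('k)) n m' (Poly_Mapping.single (j, ?U) 1 + r')"
      using top[OF m' jA' jmax'] e by auto
    have "EXP r = EXP r'" using r(3) r'(3) e unfolding EXP_add by (metis add_left_cancel)
    moreover have "deg r = N" using r(2) d by simp
    ultimately have "conn (TYPE('k)) n r r'" using Suc.IH r(1) r'(1) by blast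
    moreover have "ks (Poly_Mapping.single (j, ?U) (1::nat)) \<subseteq> phi_vars n"
    proof -
      have "(j, A) \<in> phi_vars n" using jA m by blast
      then have "j \<in> {1..n}" by (simp add: pv_iff)
      then have "(j, ?U) \<in> phi_vars n" using U_sub[OF m] by (simp add: pv_iff)
      then show ?thesis by simp
    qed
    ultimately have "conn (TYPE('k)) n (Poly_Mapping.single (j, ?U) 1 + r) (Poly_Mapping.single (j, ?U) 1 + r')"
      by (rule conn_shift)
    then show "conn (TYPE('k)) n m m'"
      using r(4) r'(4) by (meson conn_sym conn_trans)
  qed
qed



lemma xvar_in: "(i, A) \<in> phi_vars n \<Longrightarrow> xvar i A \<in> poly_ring (phi_vars n)"
  by (simp add: xvar_def mvar_def poly_ring_single)

lemma phi_xx: "phi (xvar i A * xvar j B :: (nat \<times> nat set, 'k::comm_ring_1) mpoly) = Poly_Mapping.single (e1 (i, A) + e1 (j, B)) 1"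
  unfolding xvar_mult phi_single EXP_add EXP_single by simp

lemma bin_props:
  assumes "(i, A) \<in> phi_vars n" "(j, B) \<in> phi_vars n" "(i', A') \<in> phi_vars n" "(j', B') \<in> phi_vars n"
    and e: "e1 (i, A) + e1 (j, B) = e1 (i', A') + e1 (j', B')"
  shows "(xvar i A * xvar j B - xvar i' A' * xvar j' B' :: (nat \<times> nat set, 'k::comm_ring_1) mpoly) \<in> poly_ring (phi_vars n)
     \<and> phi (xvar i A * xvar j B - xvar i' A' * xvar j' B' :: (nat \<times> nat set, 'k) mpoly) = 0"
  using assms by (simp add: phi_minus phi_xx poly_ring_diff poly_ring_mult xvar_in)

lemma L_fin: "(i, A) \<in> L_vars n \<Longrightarrow> finite A"
  unfolding L_vars_def by (auto intro: finite_subset)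

lemma T_props:
  assumes "t \<in> T1 n \<union> T2 n"
  shows "t \<in> poly_ring (phi_vars n) \<and> phi t = 0"
  using assms
proof
  assume "t \<in> T1 n"
  then obtain i A j B where t: "t = G_L_binom i A j B" "(i, A) \<in> L_vars n" "(j, B) \<in> L_vars n"
     "i \<notin> A" "j \<notin> B" "min i j \<notin> A \<inter> B" "max i j \<notin> A \<union> B"
    unfolding T1_def by blast
  have v: "(i, A) \<in> phi_vars n" "(j, B) \<in> phi_vars n" "(min i j, A \<inter> B) \<in> phi_vars n" "(max i j, A \<union> B) \<in> phi_vars n"
    using t(2-7) by (auto simp: L_vars_def pv_iff min_def max_def)
  have e: "e1 (i, A) + e1 (j, B) = e1 (min i j, A \<inter> B) + e1 (max i j, A \<union> B)"
    by (rule e1_eq) (use L_fin[OF t(2)] L_fin[OF t(3)] in \<open>auto simp: min_def max_def\<close>)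
  show ?thesis using bin_props[OF v e] t(1) by (simp add: G_L_binom_def)
next
  assume "t \<in> T2 n"
  then obtain i A j B where t: "t = xvar i A * xvar j B - xvar i ((A \<inter> B) \<union> {j}) * xvar j ((A - {j}) \<union> B)"
     "(i, A) \<in> L_vars n" "(j, B) \<in> L_vars n" "i < j" "i \<notin> A" "j \<notin> B" "j \<in> A"
    unfolding T2_def by blast
  have v: "(i, A) \<in> phi_vars n" "(j, B) \<in> phi_vars n" "(i, (A \<inter> B) \<union> {j}) \<in> phi_vars n" "(j, (A - {j}) \<union> B) \<in> phi_vars n"
    using t(2-7) by (auto simp: L_vars_def pv_iff)
  have e: "e1 (i, A) + e1 (j, B) = e1 (i, (A \<inter> B) \<union> {j}) + e1 (j, (A - {j}) \<union> B)"
    by (rule e1_eq) (use L_fin[OF t(2)] L_fin[OF t(3)] t(6,7) in auto)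
  show ?thesis using bin_props[OF v e] t(1) by simp
qed

lemma J_sum: "(\<And>a. a \<in> S \<Longrightarrow> f a \<in> ideal_gen_in (poly_ring V) T) \<Longrightarrow> sum f S \<in> ideal_gen_in (poly_ring V) T"
  by (induction S rule: infinite_finite_induct) (auto intro: J_add ideal_0)

lemma single_sum: "Poly_Mapping.single k (sum f A) = (\<Sum>x\<in>A. Poly_Mapping.single k (f x))"
  by (induction A rule: infinite_finite_induct) (auto simp: single_add)

theorem theorem3p5:
  fixes n :: nat
  shows "ideal_gen_in (poly_ring (phi_vars n)) (T1 n \<union> T2 n)
           = (I_phi n :: (nat \<times> nat set, 'k::field) mpoly set)"
proof (intro equalityI subsetI)
  fix x :: "(nat \<times> nat set, 'k) mpoly"
  assume x: "x \<in> ideal_gen_in (poly_ring (phi_vars n)) (T1 n \<union> T2 n)"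
  have TR: "T1 n \<union> T2 n \<subseteq> (poly_ring (phi_vars n) :: (nat \<times> nat set, 'k) mpoly set)"
    using T_props by blast
  have xR: "x \<in> poly_ring (phi_vars n)" by (rule ideal_elem_in_R[OF x TR])
  from x obtain F c where F: "x = (\<Sum>t\<in>F. c t * t)" "F \<subseteq> T1 n \<union> T2 n"
    unfolding ideal_gen_in_def by blast
  have "phi x = (\<Sum>t\<in>F. phi (c t) * phi t)"
    unfolding F(1) by (simp add: phi_def subst_hom_sum subst_hom_mult)
  also have "\<dots> = 0"
  proof (intro sum.neutral ballI)
    fix t assume "t \<in> F"
    then have "t \<in> T1 n \<union> T2 n" using F(2) by blast
    then have "phi t = 0" using T_props by blast
    then show "phi (c t) * phi t = 0" by simp
  qed
  finally show "x \<in> I_phi n" using xR by (simp add: I_phi_def)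
next
  fix p :: "(nat \<times> nat set, 'k) mpoly"
  assume "p \<in> I_phi n"
  then have pR: "p \<in> poly_ring (phi_vars n)" and p0: "phi p = 0" by (auto simp: I_phi_def)
  have pk: "\<And>m. m \<in> ks p \<Longrightarrow> ks m \<subseteq> phi_vars n" using pR by (simp add: poly_ring_def)
  define cf where "cf e = (SOME m. ks m \<subseteq> phi_vars n \<and> EXP m = e)" for e
  have cf: "ks (cf (EXP m)) \<subseteq> phi_vars n \<and> EXP (cf (EXP m)) = EXP m" if "m \<in> ks p" for m
    unfolding cf_def by (rule someI[of _ m]) (use pk[OF that] in simp)
  let ?J = "ideal_gen_in (poly_ring (phi_vars n)) (T1 n \<union> T2 n)"
  define a where "a m = lk p m" for m
  have 1: "(\<Sum>m\<in>ks p. Poly_Mapping.single m (a m) - Poly_Mapping.single (cf (EXP m)) (a m)) \<in> ?J"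
  proof (rule J_sum)
    fix m assume m: "m \<in> ks p"
    have "conn (TYPE('k)) n m (cf (EXP m))"
      using main_conn[rule_format, OF refl pk[OF m], of "cf (EXP m)"] cf[OF m] by metis
    then have "(Poly_Mapping.single m 1 - Poly_Mapping.single (cf (EXP m)) 1 :: (nat \<times> nat set, 'k) mpoly) \<in> ?J"
      by (simp add: conn_def)
    then have "mconst (a m) * (Poly_Mapping.single m 1 - Poly_Mapping.single (cf (EXP m)) 1 :: (nat \<times> nat set, 'k) mpoly) \<in> ?J"
      by (rule J_mult[OF poly_ring_mconst])
    then show "Poly_Mapping.single m (a m) - Poly_Mapping.single (cf (EXP m)) (a m) \<in> ?J"
      by (simp add: mconst_def mult_single right_diff_distrib)
  qed
  have 2: "(\<Sum>m\<in>ks p. Poly_Mapping.single (cf (EXP m)) (a m)) = (0 :: (nat \<times> nat set, 'k) mpoly)"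
  proof -
    have grp: "(\<Sum>m\<in>ks p. Poly_Mapping.single (cf (EXP m)) (a m)) =
        (\<Sum>e\<in>EXP ` ks p. \<Sum>m\<in>{m \<in> ks p. EXP m = e}. Poly_Mapping.single (cf e) (a m))"
    proof -
      have "(\<Sum>m\<in>ks p. Poly_Mapping.single (cf (EXP m)) (a m)) =
        (\<Sum>e\<in>EXP ` ks p. \<Sum>m\<in>{m \<in> ks p. EXP m = e}. Poly_Mapping.single (cf (EXP m)) (a m))"
        by (rule sum.image_gen) simp
      also have "\<dots> = (\<Sum>e\<in>EXP ` ks p. \<Sum>m\<in>{m \<in> ks p. EXP m = e}. Poly_Mapping.single (cf e) (a m))"
        by (intro sum.cong refl) auto
      finally show ?thesis .
    qed
    have z: "(\<Sum>m\<in>{m \<in> ks p. EXP m = e}. a m) = 0" for e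
    proof -
      have "lk (phi p) e = (\<Sum>m\<in>ks p. lk (Poly_Mapping.single (EXP m) (a m)) e)"
        by (simp add: phi_expand lookup_sum a_def)
      also have "\<dots> = (\<Sum>m\<in>ks p. if EXP m = e then a m else 0)"
        by (simp add: lookup_single when_def)
      also have "\<dots> = (\<Sum>m\<in>{m \<in> ks p. EXP m = e}. a m)"
        by (simp add: sum.inter_filter)
      finally show ?thesis using p0 by simp
    qed
    have "(\<Sum>m\<in>{m \<in> ks p. EXP m = e}. Poly_Mapping.single (cf e) (a m)) = (0 :: (nat \<times> nat set, 'k) mpoly)" for e
      using z[of e] single_sum[of "cf e" a "{m \<in> ks p. EXP m = e}", symmetric] by simp
    then show ?thesis using grp by simp
  qed
  have "p = (\<Sum>m\<in>ks p. Poly_Mapping.single m (a m))" unfolding a_def by (rule poly_expand)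
  also have "\<dots> = (\<Sum>m\<in>ks p. Poly_Mapping.single m (a m) - Poly_Mapping.single (cf (EXP m)) (a m))
                 + (\<Sum>m\<in>ks p. Poly_Mapping.single (cf (EXP m)) (a m))"
    by (simp add: sum.distrib[symmetric])
  also have "\<dots> = (\<Sum>m\<in>ks p. Poly_Mapping.single m (a m) - Poly_Mapping.single (cf (EXP m)) (a m))"
    using 2 by simp
  finally show "p \<in> ?J" using 1 by simp
qed


end
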